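(* Let $w\in\mathbb Q$ with $w>-\mu_\kappa$, and let $k\in\{1,\dots,\kappa\}$ be such that $-\mu_k\leq w<-\mu_{k-1}$ (convention $\mu_0=-\infty$). Then $\epsilon(w)$ is greater than or equal to the minimum of the set $$\{\epsilon(w')\,\ell^{d_{w,w'}-\alpha_{k-1}}: w'\in\Delta(w)\}\cup\{-\mu_{k-1}-w,\ \min(\pi(\Psi(w))\setminus\{w\})-w\},$$ where $\min\emptyset=+\infty$ and $d_{w,w'}=\min\{\alpha\in\{0,\dots,n\}:\exists(\ell^\alpha,\beta)\in\mathcal P(L),\ w'=\frac{\psi(w)-\beta}{\ell^\alpha}\}$; this minimum is a positive element of $\mathbb Q_{>0}\cup\{+\infty\}$.
   Context: Let $\mathbf K$ be a field and $\ell\geq 2$ an integer. Let $L=a_n\phi_\ell^n+\dots+a_0$ with $n\geq1$, $a_i\in\mathbf K[z]$, $a_0a_n\neq0$, where $\phi_\ell(f)(z)=f(z^\ell)$ acting on Hahn series with coefficients in $\mathbf K$ and value group $\mathbb Q$. Let $\mathcal P(L)=\{(\ell^i,j): 0\le i\le n,\ j\in\operatorname{supp} a_i\}$. The Newton polygon of $L$ is the convex hull of $\{(\ell^i,j): 0\le i\le n,\ j\geq\operatorname{val} a_i\}\subset\mathbb R^2$; its non-vertical edges have slopes $\mu_1<\dots<\mu_\kappa$, $\mathcal S(L)=\{\mu_1,\dots,\mu_\kappa\}$; its vertices ordered by increasing abscissa are $p_0,\dots,p_\kappa$ with $p_k=(\ell^{\alpha_k},\beta_k)$, $\beta_k=\operatorname{val}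 a_{\alpha_k}$, the edge of slope $\mu_k$ joining $p_{k-1}$ and $p_k$. Define $\Psi(v)=\{v\ell^i+j:(\ell^i,j)\in\mathcal P(L)\}$, $\psi(v)=\min\Psi(v)$, $\pi(q)=\max\{(q-j)/\ell^i:(\ell^i,j)\in\mathcal P(L)\}$, and $\Delta(w)=\left\{\frac{\psi(w)-\beta}{\ell^\alpha}:(\ell^\alpha,\beta)\in\mathcal P(L)\right\}\setminus\{w\}$. Let $\mathcal V_0=-\mathcal S(L)$, $\mathcal V_{i+1}=\bigcup_{v\in\mathcal V_i}\pi(\Psi(v))$, $\mathcal V=\bigcup_{i\ge0}\mathcal V_i$ (a well-ordered set). For $v\in\mathbb Q$ let $\epsilon(v)=\min\{u\in\mathcal V: u>v\}-v\in\mathbb Q_{>0}\cup\{+\infty\}$ ($+\infty$ if the set is empty). *)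

theory Defs
  imports "HOL-Analysis.Analysis" "HOL-Computational_Algebra.Polynomial"
begin

text \<open>The operator L = a_n phi^n + ... + a_0 is given by l, n and the coefficient
  function a (only a 0, ..., a n matter). A point (l^i, j) of P(L) is encoded by the
  pair of naturals (i, j).\<close>

definition pval :: "'a::zero poly \<Rightarrow> nat" where
  "pval p = (LEAST j. coeff p j \<noteq> 0)"

definition PL :: "nat \<Rightarrow> (nat \<Rightarrow> 'a::zero poly) \<Rightarrow> (nat \<times> nat) set" where
  "PL n a = {(i, j). i \<le> n \<and> coeff (a i) j \<noteq> 0}"

definition newton_polygon :: "nat \<Rightarrow> nat \<Rightarrow> (nat \<Rightarrow> 'a::zero poly) \<Rightarrow> (real \<times> real) set" where
  "newton_polygon l n a =
     convex hull {(real l ^ i, y) | i y. i \<le> n \<and> a i \<noteq> 0 \<and> real (pval (a i)) \<le> y}"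

definition NP_alphas :: "nat \<Rightarrow> nat \<Rightarrow> (nat \<Rightarrow> 'a::zero poly) \<Rightarrow> nat list" where
  "NP_alphas l n a = sorted_list_of_set
     {i. i \<le> n \<and> (\<exists>y. (real l ^ i, y) extreme_point_of newton_polygon l n a)}"

definition NP_kappa :: "nat \<Rightarrow> nat \<Rightarrow> (nat \<Rightarrow> 'a::zero poly) \<Rightarrow> nat" where
  "NP_kappa l n a = length (NP_alphas l n a) - 1"

definition NP_alpha :: "nat \<Rightarrow> nat \<Rightarrow> (nat \<Rightarrow> 'a::zero poly) \<Rightarrow> nat \<Rightarrow> nat" where
  "NP_alpha l n a k = NP_alphas l n a ! k"

definition NP_beta :: "nat \<Rightarrow> nat \<Rightarrow> (nat \<Rightarrow> 'a::zero poly) \<Rightarrow> nat \<Rightarrow> nat" where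
  "NP_beta l n a k = pval (a (NP_alpha l n a k))"

definition NP_mu :: "nat \<Rightarrow> nat \<Rightarrow> (nat \<Rightarrow> 'a::zero poly) \<Rightarrow> nat \<Rightarrow> rat" where
  "NP_mu l n a k =
     (of_nat (NP_beta l n a k) - of_nat (NP_beta l n a (k - 1))) /
     (of_nat l ^ NP_alpha l n a k - of_nat l ^ NP_alpha l n a (k - 1))"

definition NP_slopes :: "nat \<Rightarrow> nat \<Rightarrow> (nat \<Rightarrow> 'a::zero poly) \<Rightarrow> rat set" where
  "NP_slopes l n a = NP_mu l n a ` {1..NP_kappa l n a}"

definition Psi :: "nat \<Rightarrow> nat \<Rightarrow> (nat \<Rightarrow> 'a::zero poly) \<Rightarrow> rat \<Rightarrow> rat set" where
  "Psi l n a v = {v * of_nat l ^ i + of_nat j | i j. (i, j) \<in> PL n a}"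

definition psi :: "nat \<Rightarrow> nat \<Rightarrow> (nat \<Rightarrow> 'a::zero poly) \<Rightarrow> rat \<Rightarrow> rat" where
  "psi l n a v = Min (Psi l n a v)"

definition piL :: "nat \<Rightarrow> nat \<Rightarrow> (nat \<Rightarrow> 'a::zero poly) \<Rightarrow> rat \<Rightarrow> rat" where
  "piL l n a q = Max {(q - of_nat j) / of_nat l ^ i | i j. (i, j) \<in> PL n a}"

definition Delta :: "nat \<Rightarrow> nat \<Rightarrow> (nat \<Rightarrow> 'a::zero poly) \<Rightarrow> rat \<Rightarrow> rat set" where
  "Delta l n a w =
     {(psi l n a w - of_nat \<beta>) / of_nat l ^ \<alpha> | \<alpha> \<beta>. (\<alpha>, \<beta>) \<in> PL n a} - {w}"

fun Vi :: "nat \<Rightarrow> nat \<Rightarrow> (nat \<Rightarrow> 'a::zero poly) \<Rightarrow> nat \<Rightarrow> rat set" where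
  "Vi l n a 0 = uminus ` NP_slopes l n a"
| "Vi l n a (Suc m) = (\<Union>v\<in>Vi l n a m. piL l n a ` Psi l n a v)"

definition Vset :: "nat \<Rightarrow> nat \<Rightarrow> (nat \<Rightarrow> 'a::zero poly) \<Rightarrow> rat set" where
  "Vset l n a = (\<Union>m. Vi l n a m)"

definition eps :: "nat \<Rightarrow> nat \<Rightarrow> (nat \<Rightarrow> 'a::zero poly) \<Rightarrow> rat \<Rightarrow> ereal" where
  "eps l n a v =
     (if \<exists>u\<in>Vset l n a. v < u
      then ereal (real_of_rat ((LEAST u. u \<in> Vset l n a \<and> v < u) - v))
      else \<infinity>)"

definition dww :: "nat \<Rightarrow> nat \<Rightarrow> (nat \<Rightarrow> 'a::zero poly) \<Rightarrow> rat \<Rightarrow> rat \<Rightarrow> nat" where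
  "dww l n a w w' = (LEAST \<alpha>. \<alpha> \<le> n \<and>
      (\<exists>\<beta>. (\<alpha>, \<beta>) \<in> PL n a \<and> w' = (psi l n a w - of_nat \<beta>) / of_nat l ^ \<alpha>))"

end

theory Submission
  imports Defs
begin


lemma closure_wf:
  fixes V :: "nat \<Rightarrow> 'b::linorder set" and F :: "'p \<Rightarrow> 'b \<Rightarrow> 'b"
  assumes fin0: "finite (V 0)" and finP: "finite P"
    and par: "\<And>m u. u \<in> V (Suc m) \<Longrightarrow> \<exists>v\<in>V m. \<exists>p\<in>P. u = F p v"
    and mono: "\<And>p v v'. p \<in> P \<Longrightarrow> v \<le> v' \<Longrightarrow> F p v \<le> F p v'"
    and infl: "\<And>p v. p \<in> P \<Longrightarrow> v \<le> F p v"
  shows "wf {(x,y). x \<in> (\<Union>m. V m) \<and> y \<in> (\<Union>m. V m) \<and> x < y}"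
proof (rule ccontr)
  define W where "W = (\<Union>m. V m)"
  define B where "B = {u. \<exists>f. f 0 = u \<and> (\<forall>i. f i \<in> W \<and> f (Suc i) < f i)}"
  define dep where "dep u = (LEAST m. u \<in> V m)" for u
  have dep: "u \<in> V (dep u)" if "u \<in> W" for u
    using that unfolding W_def dep_def by (auto intro: LeastI)
  have dep_le: "dep u \<le> m" if "u \<in> V m" for u m
    using that unfolding dep_def by (auto intro: Least_le)
  have BW: "u \<in> W" if "u \<in> B" for u using that unfolding B_def by force
  have Bstep: "\<exists>u'\<in>B. u' < u" if "u \<in> B" for u
  proof -
    from that obtain f where f: "f 0 = u" "\<forall>i. f i \<in> W \<and> f (Suc i) < f i"
      unfolding B_def by blast
    have "f 1 \<in> B" unfolding B_def using f by (intro CollectI exI[of _ "\<lambda>i. f (Suc i)"]) auto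
    moreover have "f 1 < u" using f by (metis One_nat_def)
    ultimately show ?thesis by blast
  qed
  have choose: "\<exists>u'. u' \<in> B \<and> u' < u \<and> (\<forall>u''. u'' \<in> B \<and> u'' < u \<longrightarrow> dep u' \<le> dep u'')"
    if "u \<in> B" for u
  proof -
    from Bstep[OF that] obtain u0 where "u0 \<in> B \<and> u0 < u" by blast
    from ex_has_least_nat[of "\<lambda>x. x \<in> B \<and> x < u", OF this] show ?thesis by blast
  qed
  define nxt where "nxt u = (SOME u'. u' \<in> B \<and> u' < u \<and> (\<forall>u''. u'' \<in> B \<and> u'' < u \<longrightarrow> dep u' \<le> dep u''))" for u
  assume "\<not> wf {(x,y). x \<in> (\<Union>m. V m) \<and> y \<in> (\<Union>m. V m) \<and> x < y}"
  then obtain f where f: "\<forall>i. (f (Suc i), f i) \<in> {(x,y). x \<in> W \<and> y \<in> W \<and> x < y}"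
    unfolding wf_iff_no_infinite_down_chain W_def by blast
  have "f 0 \<in> B" unfolding B_def using f by blast
  define s where "s = rec_nat (f 0) (\<lambda>_ u. nxt u)"
  have s0: "s 0 = f 0" and sS: "s (Suc k) = nxt (s k)" for k unfolding s_def by simp_all
  have sB: "s k \<in> B" for k
  proof (induction k)
    case 0 then show ?case using s0 \<open>f 0 \<in> B\<close> by simp
  next
    case (Suc k)
    from someI_ex[OF choose[OF Suc]] show ?case unfolding sS nxt_def by blast
  qed
  have sprop: "s (Suc k) < s k \<and> (\<forall>u''. u'' \<in> B \<and> u'' < s k \<longrightarrow> dep (s (Suc k)) \<le> dep u'')" for k
    using someI_ex[OF choose[OF sB[of k]]] unfolding sS nxt_def by blast
  have sdec: "s k' < s k" if "k < k'" for k k'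
    using that
  proof (induction k' rule: less_induct)
    case (less x)
    then obtain y where y: "x = Suc y" by (cases x) auto
    show ?case
    proof (cases "k = y")
      case True then show ?thesis using sprop[of y] y by simp
    next
      case False
      then have "k < y" using less.prems y by simp
      then have "s y < s k" using less.IH y by simp
      then show ?thesis using sprop[of y] y by (meson less_trans)
    qed
  qed
  have sinj: "inj s"
    by (rule injI) (metis less_irrefl nat_neq_iff sdec)
  have "finite (s -` V 0)" using fin0 sinj by (simp add: finite_vimageI)
  moreover have "{k. dep (s k) = 0} \<subseteq> s -` V 0" proof
    fix k assume "k \<in> {k. dep (s k) = 0}"
    then have "dep (s k) = 0" by simp
    then show "k \<in> s -` V 0" using dep[OF BW[OF sB[of k]]] by simp
  qed
  ultimately have fin_dep0: "finite {k. dep (s k) = 0}" by (rule finite_subset[rotated])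
  define K0 where "K0 = {k. 1 \<le> k \<and> dep (s k) \<noteq> 0}"
  have "K0 = UNIV - ({k. dep (s k) = 0} \<union> {0})" unfolding K0_def by auto
  then have infK0: "infinite K0" using fin_dep0 by (simp add: Diff_infinite_finite)
  have parex: "\<exists>vp. fst vp \<in> V (dep (s k) - 1) \<and> snd vp \<in> P \<and> s k = F (snd vp) (fst vp)"
    if "k \<in> K0" for k
  proof -
    have "s k \<in> V (Suc (dep (s k) - 1))" using that dep[OF BW[OF sB]] unfolding K0_def by simp
    from par[OF this] show ?thesis by auto
  qed
  define pa where "pa k = (SOME vp. fst vp \<in> V (dep (s k) - 1) \<and> snd vp \<in> P \<and> s k = F (snd vp) (fst vp))" for k
  have pa: "fst (pa k) \<in> V (dep (s k) - 1) \<and> snd (pa k) \<in> P \<and> s k = F (snd (pa k)) (fst (pa k))"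
    if "k \<in> K0" for k using someI_ex[OF parex[OF that]] unfolding pa_def .
  have "finite ((snd \<circ> pa) ` K0)" using pa finP by (auto intro: finite_subset[of _ P])
  from inf_img_fin_domE'[OF this infK0] obtain p where
    "infinite ((snd \<circ> pa) -` {p} \<inter> K0)" by blast
  define K where "K = (snd \<circ> pa) -` {p} \<inter> K0"
  have infK: "infinite K" using \<open>infinite ((snd \<circ> pa) -` {p} \<inter> K0)\<close> K_def by simp
  define e where "e = enumerate K"
  have e_mono: "strict_mono e" unfolding e_def using infK by (rule strict_mono_enumerate)
  have eK: "e i \<in> K" for i unfolding e_def using infK by (rule enumerate_in_set)
  define g where "g i = fst (pa (e i))" for i
  have eK0: "e i \<in> K0" and ep: "snd (pa (e i)) = p" for i using eK[of i] unfolding K_def by auto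
  have pP: "p \<in> P" using pa[OF eK0[of 0]] ep[of 0] by simp
  have sg: "s (e i) = F p (g i)" for i using pa[OF eK0[of i]] ep[of i] unfolding g_def by simp
  have gW: "g i \<in> W" for i using pa[OF eK0[of i]] unfolding g_def W_def by blast
  have gdec: "g (Suc i) < g i" for i
  proof (rule ccontr)
    assume "\<not> g (Suc i) < g i"
    then have "g i \<le> g (Suc i)" by simp
    then have "s (e i) \<le> s (e (Suc i))" using sg mono[OF pP] by simp
    moreover have "s (e (Suc i)) < s (e i)" using sdec e_mono by (simp add: strict_mono_def)
    ultimately show False by simp
  qed
  have gB: "g 0 \<in> B" unfolding B_def using gW gdec by blast
  obtain k' where k': "e 0 = Suc k'" using eK0[of 0] unfolding K0_def by (cases "e 0") auto
  have "g 0 \<le> s (e 0)" using sg infl[OF pP] by simp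
  also have "s (e 0) < s k'" using sprop[of k'] k' by simp
  finally have "dep (s (e 0)) \<le> dep (g 0)" using sprop[of k'] gB k' by simp
  moreover have "dep (g 0) \<le> dep (s (e 0)) - 1"
    using pa[OF eK0[of 0]] dep_le unfolding g_def by blast
  moreover have "dep (s (e 0)) \<noteq> 0" using eK0[of 0] unfolding K0_def by simp
  ultimately show False by simp
qed


lemma pval_coeff: "p \<noteq> 0 \<Longrightarrow> coeff p (pval p) \<noteq> 0"
  unfolding pval_def by (rule LeastI_ex) (use leading_coeff_neq_0 in blast)

lemma pval_le: "coeff p j \<noteq> 0 \<Longrightarrow> pval p \<le> j"
  unfolding pval_def by (rule Least_le)

lemma PL_finite: "finite (PL n a)"
proof -
  have "PL n a \<subseteq> (\<Union>i\<le>n. {i} \<times> {..degree (a i)})"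
    unfolding PL_def by (auto intro: le_degree)
  then show ?thesis by (rule finite_subset) auto
qed

lemma PL_ne: "a 0 \<noteq> 0 \<Longrightarrow> (0, pval (a 0)) \<in> PL n a"
  unfolding PL_def by (simp add: pval_coeff)

lemma Psi_img: "Psi l n a v = (\<lambda>(i,j). v * of_nat l ^ i + of_nat j) ` PL n a"
  unfolding Psi_def by auto

lemma piL_img: "{(q - of_nat j) / of_nat l ^ i | i j. (i, j) \<in> PL n a}
   = (\<lambda>(i,j). (q - of_nat j) / of_nat l ^ i) ` PL n a"
  by auto

context
  fixes l n :: nat and a :: "nat \<Rightarrow> 'a::zero poly"
  assumes l2: "l \<ge> 2" and a0: "a 0 \<noteq> 0"
begin

lemma Psi_fin: "finite (Psi l n a v)" unfolding Psi_img by (simp add: PL_finite)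
lemma Psi_ne: "Psi l n a v \<noteq> {}" unfolding Psi_img using PL_ne[of a n, OF a0] by blast

lemma psi_le: "(i,j) \<in> PL n a \<Longrightarrow> psi l n a v \<le> v * of_nat l ^ i + of_nat j"
  unfolding psi_def using Psi_fin by (intro Min_le) (auto simp: Psi_def)

lemma psi_in: "\<exists>(i,j)\<in>PL n a. psi l n a v = v * of_nat l ^ i + of_nat j"
proof -
  have "psi l n a v \<in> Psi l n a v" unfolding psi_def using Psi_fin Psi_ne by (rule Min_in)
  then show ?thesis unfolding Psi_img by auto
qed

lemma lpos: "(0::rat) < of_nat l ^ i" using l2 by simp

lemma piL_ge: "(i,j) \<in> PL n a \<Longrightarrow> (q - of_nat j) / of_nat l ^ i \<le> piL l n a q"
  unfolding piL_def piL_img using PL_finite by (intro Max_ge) auto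

lemma piL_in: "\<exists>(i,j)\<in>PL n a. piL l n a q = (q - of_nat j) / of_nat l ^ i"
proof -
  have "piL l n a q \<in> (\<lambda>(i,j). (q - of_nat j) / of_nat l ^ i) ` PL n a"
    unfolding piL_def piL_img using PL_finite PL_ne[of a n, OF a0] by (intro Max_in) auto
  then show ?thesis by auto
qed

lemma piL_mono: "q \<le> q' \<Longrightarrow> piL l n a q \<le> piL l n a q'"
proof -
  assume "q \<le> q'"
  obtain i j where ij: "(i,j) \<in> PL n a" "piL l n a q = (q - of_nat j) / of_nat l ^ i"
    using piL_in[of q] by auto
  have "(q - of_nat j) / of_nat l ^ i \<le> (q' - of_nat j) / of_nat l ^ i"
    using \<open>q \<le> q'\<close> lpos[of i] by (simp add: divide_right_mono)
  also have "\<dots> \<le> piL l n a q'" by (rule piL_ge[OF ij(1)])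
  finally show ?thesis using ij by simp
qed

lemma piL_infl: "(i,j) \<in> PL n a \<Longrightarrow> v \<le> piL l n a (v * of_nat l ^ i + of_nat j)"
proof -
  assume h: "(i,j) \<in> PL n a"
  have "(v * of_nat l ^ i + of_nat j - of_nat j) / of_nat l ^ i = v" using lpos[of i] by simp
  then show ?thesis using piL_ge[OF h, of "v * of_nat l ^ i + of_nat j"] by simp
qed

lemma le_psi_div: "(i,j) \<in> PL n a \<Longrightarrow> (psi l n a w - of_nat j) / of_nat l ^ i \<le> w"
  using psi_le[of i j w] lpos[of i] by (simp add: divide_le_eq)

lemma piL_psi: "piL l n a (psi l n a w) = w"
proof (rule antisym)
  obtain i j where ij: "(i,j) \<in> PL n a" "piL l n a (psi l n a w) = (psi l n a w - of_nat j) / of_nat l ^ i"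
    using piL_in[of "psi l n a w"] by auto
  then show "piL l n a (psi l n a w) \<le> w" using le_psi_div by simp
next
  obtain i j where ij: "(i,j) \<in> PL n a" "psi l n a w = w * of_nat l ^ i + of_nat j"
    using psi_in[of w] by auto
  then show "w \<le> piL l n a (psi l n a w)" using piL_infl by simp
qed

lemma piL_less: "q < psi l n a w \<Longrightarrow> piL l n a q < w"
proof -
  assume "q < psi l n a w"
  obtain i j where ij: "(i,j) \<in> PL n a" "piL l n a q = (q - of_nat j) / of_nat l ^ i"
    using piL_in[of q] by auto
  have "(q - of_nat j) / of_nat l ^ i < (psi l n a w - of_nat j) / of_nat l ^ i"
    using \<open>q < psi l n a w\<close> lpos[of i] by (simp add: divide_strict_right_mono)
  also have "\<dots> \<le> w" using le_psi_div[OF ij(1)] .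
  finally show ?thesis using ij by simp
qed

lemma Vi_par: "u \<in> Vi l n a (Suc m) \<Longrightarrow>
   \<exists>v\<in>Vi l n a m. \<exists>p\<in>PL n a. u = (\<lambda>(i,j) v. piL l n a (v * of_nat l ^ i + of_nat j)) p v"
proof -
  assume "u \<in> Vi l n a (Suc m)"
  then obtain v i j where "v \<in> Vi l n a m" "(i,j) \<in> PL n a" "u = piL l n a (v * of_nat l ^ i + of_nat j)"
    by (auto simp: Psi_def)
  then show ?thesis by (intro bexI[of _ v] bexI[of _ "(i,j)"]) auto
qed

lemma V_wf: "wf {(x,y). x \<in> Vset l n a \<and> y \<in> Vset l n a \<and> x < y}"
  unfolding Vset_def
proof (rule closure_wf[where P="PL n a" and F="\<lambda>(i,j) v. piL l n a (v * of_nat l ^ i + of_nat j)"])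
  show "finite (Vi l n a 0)" by (simp add: NP_slopes_def)
  show "finite (PL n a)" by (rule PL_finite)
  show "\<And>m u. u \<in> Vi l n a (Suc m) \<Longrightarrow> \<exists>v\<in>Vi l n a m. \<exists>p\<in>PL n a. u = (\<lambda>(i,j) v. piL l n a (v * of_nat l ^ i + of_nat j)) p v"
    by (rule Vi_par)
  show "\<And>p v v'. p \<in> PL n a \<Longrightarrow> v \<le> v' \<Longrightarrow> (\<lambda>(i,j) v. piL l n a (v * of_nat l ^ i + of_nat j)) p v \<le> (\<lambda>(i,j) v. piL l n a (v * of_nat l ^ i + of_nat j)) p v'"
    using lpos by (auto intro!: piL_mono mult_right_mono)
  show "\<And>p v. p \<in> PL n a \<Longrightarrow> v \<le> (\<lambda>(i,j) v. piL l n a (v * of_nat l ^ i + of_nat j)) p v"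
    using piL_infl by auto
qed

lemma V_min: assumes "u \<in> Vset l n a" "w < u"
  shows "\<exists>u0\<in>Vset l n a. w < u0 \<and> (\<forall>u\<in>Vset l n a. w < u \<longrightarrow> u0 \<le> u)
     \<and> (LEAST u. u \<in> Vset l n a \<and> w < u) = u0"
proof -
  obtain z where z: "z \<in> {u\<in>Vset l n a. w < u}"
     "\<And>y. (y,z) \<in> {(x,y). x \<in> Vset l n a \<and> y \<in> Vset l n a \<and> x < y} \<Longrightarrow> y \<notin> {u\<in>Vset l n a. w < u}"
    using wfE_min[OF V_wf, of u "{u\<in>Vset l n a. w < u}"] assms by blast
  have zmin: "\<forall>u\<in>Vset l n a. w < u \<longrightarrow> z \<le> u"
    using z by (metis (mono_tags, lifting) case_prodI mem_Collect_eq not_le_imp_less)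
  have "(LEAST u. u \<in> Vset l n a \<and> w < u) = z"
    using z zmin by (intro Least_equality) auto
  then show ?thesis using z zmin by blast
qed

end


definition QQ :: "nat \<Rightarrow> nat \<Rightarrow> (nat \<Rightarrow> 'a::zero poly) \<Rightarrow> (real \<times> real) set" where
  "QQ l n a = {(real l ^ i, y) | i y. i \<le> n \<and> a i \<noteq> 0 \<and> real (pval (a i)) \<le> y}"
definition II :: "nat \<Rightarrow> (nat \<Rightarrow> 'a::zero poly) \<Rightarrow> nat set" where "II n a = {i. i \<le> n \<and> a i \<noteq> 0}"

context
  fixes l n :: nat and a :: "nat \<Rightarrow> 'a::zero poly"
  assumes l2: "l \<ge> 2"
begin


lemma H_def': "newton_polygon l n a = convex hull (QQ l n a)"
  unfolding newton_polygon_def QQ_def ..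

lemma II_fin: "finite (II n a)" unfolding II_def by simp

lemma lpow_inj: "real l ^ i = real l ^ j \<longleftrightarrow> i = j"
  using l2 by (simp add: power_inject_exp)
lemma lpow_less: "real l ^ i < real l ^ j \<longleftrightarrow> i < j"
  using l2 by simp
lemma lpow_le: "real l ^ i \<le> real l ^ j \<longleftrightarrow> i \<le> j"
  using l2 by simp

lemma H_up: assumes "z \<in> newton_polygon l n a" "d \<ge> 0"
  shows "z + (0,d) \<in> newton_polygon l n a"
proof -
  have "(+) (0,d) ` QQ l n a \<subseteq> QQ l n a" unfolding QQ_def using assms(2) by force
  then have "convex hull ((+) (0,d) ` QQ l n a) \<subseteq> convex hull (QQ l n a)" by (rule hull_mono)
  then have "(+) (0,d) ` (convex hull (QQ l n a)) \<subseteq> convex hull (QQ l n a)" by (simp add: convex_hull_translation)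
  then show ?thesis using assms(1) unfolding H_def' by (auto simp: add.commute)
qed

lemma not_ext: assumes "x \<in> newton_polygon l n a" "y \<in> newton_polygon l n a" "0 \<le> t" "t \<le> 1" "c > 0"
  shows "\<not> (t *\<^sub>R x + (1-t) *\<^sub>R y + (0,c)) extreme_point_of newton_polygon l n a"
proof
  let ?H = "newton_polygon l n a"
  define z where "z = t *\<^sub>R x + (1-t) *\<^sub>R y"
  have zH: "z \<in> ?H" unfolding z_def H_def'
    using assms by (intro convexD[OF convex_convex_hull]) (auto simp: H_def')
  have z2: "z + (0, 2*c) \<in> ?H" using H_up[OF zH] assms by simp
  have "midpoint z (z + (0,2*c)) = z + (0,c)"
    by (simp add: midpoint_def prod_eq_iff algebra_simps scaleR_prod_def)
  moreover have "z \<noteq> z + (0,2*c)" using assms by (simp add: prod_eq_iff)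
  ultimately have "z + (0,c) \<in> open_segment z (z + (0,2*c))" using midpoint_in_open_segment by metis
  moreover assume "(t *\<^sub>R x + (1-t) *\<^sub>R y + (0,c)) extreme_point_of ?H"
  ultimately show False using zH z2 unfolding extreme_point_of_def z_def by blast
qed

lemma ext_Q: assumes "p extreme_point_of newton_polygon l n a"
  shows "\<exists>i\<in>II n a. p = (real l ^ i, real (pval (a i)))"
proof -
  have "p \<in> QQ l n a" using assms unfolding H_def' by (rule extreme_point_of_convex_hull)
  then obtain i y where iy: "p = (real l ^ i, y)" "i \<le> n" "a i \<noteq> 0" "real (pval (a i)) \<le> y"
    unfolding QQ_def by blast
  have "y = real (pval (a i))"
  proof (rule ccontr)
    assume "y \<noteq> real (pval (a i))"
    then have c: "y - real (pval (a i)) > 0" using iy by simp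
    have H1: "(real l ^ i, real (pval (a i))) \<in> newton_polygon l n a" unfolding H_def'
      by (rule hull_inc) (auto simp: QQ_def iy)
    have "\<not> (1 *\<^sub>R (real l ^ i, real (pval (a i))) + (1-1) *\<^sub>R (real l ^ i, real (pval (a i))) + (0, y - real (pval (a i)))) extreme_point_of newton_polygon l n a"
      by (rule not_ext[OF H1 H1 _ _ c]) auto
    moreover have "p = 1 *\<^sub>R (real l ^ i, real (pval (a i))) + (1-1) *\<^sub>R (real l ^ i, real (pval (a i))) + (0, y - real (pval (a i)))"
      using iy by simp
    ultimately show False using assms by simp
  qed
  then show ?thesis using iy unfolding II_def by blast
qed

lemma L_min: assumes "II n a \<noteq> {}"
  shows "\<exists>i0\<in>II n a. (real l ^ i0, real (pval (a i0))) extreme_point_of newton_polygon l n a \<and>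
     (\<forall>i\<in>II n a. real (pval (a i0)) + c * real l ^ i0 \<le> real (pval (a i)) + c * real l ^ i)"
proof -
  define g where "g p = snd p + c * fst p" for p :: "real \<times> real"
  define gi where "gi i = real (pval (a i)) + c * real l ^ i" for i
  define gm where "gm = Min (gi ` II n a)"
  define J where "J = {i\<in>II n a. gi i = gm}"
  have gmin: "gm \<le> gi i" if "i \<in> II n a" for i unfolding gm_def using that II_fin by simp
  have "gm \<in> gi ` II n a" unfolding gm_def using II_fin assms by (intro Min_in) auto
  then have Jne: "J \<noteq> {}" unfolding J_def by auto
  have Jfin: "finite J" unfolding J_def using II_fin by simp
  define i0 where "i0 = Min J"
  have i0J: "i0 \<in> J" unfolding i0_def using Jfin Jne by (rule Min_in)
  have i0le: "i0 \<le> i" if "i \<in> J" for i unfolding i0_def using Jfin that by simp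
  define S where "S = {p. gm < g p \<or> (g p = gm \<and> real l ^ i0 \<le> fst p)}"
  have glin: "g (u *\<^sub>R p + v *\<^sub>R q) = u * g p + v * g q" for u v p q
    unfolding g_def by (simp add: algebra_simps)
  have glin2: "fst (u *\<^sub>R p + v *\<^sub>R q) = u * fst p + v * fst q" for u v p q
    by simp
  have convS: "convex S"
    unfolding convex_def
  proof (intro ballI allI impI)
    fix p q u v assume pq: "p \<in> S" "q \<in> S" and uv: "0 \<le> u" "0 \<le> (v::real)" "u + v = 1"
    have gp: "gm \<le> g p" "gm \<le> g q" using pq unfolding S_def by auto
    show "u *\<^sub>R p + v *\<^sub>R q \<in> S"
    proof (cases "g p = gm \<and> g q = gm")
      case True
      then have "real l ^ i0 \<le> fst p" "real l ^ i0 \<le> fst q" using pq unfolding S_def by auto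
      then have "u * real l ^ i0 + v * real l ^ i0 \<le> u * fst p + v * fst q"
        using uv by (intro add_mono mult_left_mono) auto
      then show ?thesis using True uv unfolding S_def by (simp add: glin distrib_right[symmetric])
    next
      case False
      show ?thesis
      proof (cases "u = 0 \<or> v = 0")
        case True
        then have "u *\<^sub>R p + v *\<^sub>R q = p \<or> u *\<^sub>R p + v *\<^sub>R q = q" using uv by auto
        then show ?thesis using pq by auto
      next
        case F0: False
        then have uv0: "u > 0" "v > 0" using uv by auto
        have "u * gm \<le> u * g p" "v * gm \<le> v * g q" using uv gp by (auto simp: mult_left_mono)
        moreover have "u * gm < u * g p \<or> v * gm < v * g q" using False gp uv0 by auto
        ultimately have "u * gm + v * gm < u * g p + v * g q" by linarith
        then show ?thesis unfolding S_def using uv by (simp add: glin distrib_right[symmetric])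
      qed
    qed
  qed
  have QS: "QQ l n a \<subseteq> S"
  proof
    fix p assume "p \<in> QQ l n a"
    then obtain i y where iy: "p = (real l ^ i, y)" "i \<in> II n a" "real (pval (a i)) \<le> y"
      unfolding QQ_def II_def by blast
    have "gi i \<le> g p" using iy unfolding g_def gi_def by simp
    then have "gm \<le> g p" using gmin[OF iy(2)] by simp
    show "p \<in> S"
    proof (cases "g p = gm")
      case True
      then have "gi i = gm" using \<open>gi i \<le> g p\<close> gmin[OF iy(2)] by simp
      then have "i \<in> J" using iy unfolding J_def by simp
      then have "i0 \<le> i" by (rule i0le)
      then show ?thesis using True iy lpow_le unfolding S_def by simp
    next
      case False then show ?thesis using \<open>gm \<le> g p\<close> unfolding S_def by simp
    qed
  qed
  have HS: "newton_polygon l n a \<subseteq> S" unfolding H_def' using QS convS by (rule hull_minimal)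
  define m where "m = (real l ^ i0, real (pval (a i0)))"
  have i0II: "i0 \<in> II n a" and gm0: "g m = gm" using i0J unfolding J_def m_def g_def gi_def by auto
  have mH: "m \<in> newton_polygon l n a" unfolding H_def' m_def
    by (rule hull_inc) (use i0II in \<open>auto simp: QQ_def II_def\<close>)
  have "m extreme_point_of newton_polygon l n a"
    unfolding extreme_point_of_def
  proof (intro conjI mH ballI notI)
    fix p q assume pq: "p \<in> newton_polygon l n a" "q \<in> newton_polygon l n a" and mo: "m \<in> open_segment p q"
    then obtain u where u: "p \<noteq> q" "0 < u" "u < 1" "m = (1-u) *\<^sub>R p + u *\<^sub>R q"
      by (auto simp: in_segment)
    have Sp: "p \<in> S" "q \<in> S" using pq HS by auto
    have gpq: "gm \<le> g p" "gm \<le> g q" using Sp unfolding S_def by auto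
    have "g m = (1-u) * g p + u * g q" using u(4) glin by simp
    then have eq: "(1-u) * (g p - gm) + u * (g q - gm) = 0" using gm0 by (simp add: algebra_simps)
    have t1: "(1-u) * (g p - gm) \<ge> 0" "u * (g q - gm) \<ge> 0" using u gpq by auto
    then have "(1-u) * (g p - gm) = 0" "u * (g q - gm) = 0" using eq by linarith+
    then have gpe: "g p = gm" "g q = gm" using u by auto
    then have fx: "real l ^ i0 \<le> fst p" "real l ^ i0 \<le> fst q" using Sp unfolding S_def by auto
    have "fst m = (1-u) * fst p + u * fst q" using u(4) by simp
    then have eq2: "(1-u) * (fst p - real l ^ i0) + u * (fst q - real l ^ i0) = 0"
      unfolding m_def by (simp add: algebra_simps)
    have "(1-u) * (fst p - real l ^ i0) \<ge> 0" "u * (fst q - real l ^ i0) \<ge> 0" using u fx by auto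
    then have "(1-u) * (fst p - real l ^ i0) = 0" "u * (fst q - real l ^ i0) = 0" using eq2 by linarith+
    then have "fst p = real l ^ i0" "fst q = real l ^ i0" using u by auto
    then have "snd p = snd q" using gpe unfolding g_def by simp
    then have "p = q" using \<open>fst p = real l ^ i0\<close> \<open>fst q = real l ^ i0\<close> by (simp add: prod_eq_iff)
    then show False using u by simp
  qed
  moreover have "\<forall>i\<in>II n a. real (pval (a i0)) + c * real l ^ i0 \<le> real (pval (a i)) + c * real l ^ i"
    using gmin gm0 unfolding g_def m_def gi_def by simp
  ultimately show ?thesis using i0II unfolding m_def by blast
qed

end


lemma of_rat_powi: "real_of_rat (x powi e) = real_of_rat x powi e"
  by (simp add: power_int_def of_rat_inverse of_rat_power)


context
  fixes l n :: nat and a :: "nat \<Rightarrow> 'a::zero poly"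
  assumes l2: "l \<ge> 2" and a0: "a 0 \<noteq> 0"
begin

lemma mid_contra:
  fixes x1 x2 x3 y1 y2 y3 :: real
  assumes "(x1,y1) \<in> newton_polygon l n a" "(x3,y3) \<in> newton_polygon l n a"
    "x1 < x2" "x2 < x3" "(y2 - y1)*(x3-x1) > (y3-y1)*(x2-x1)"
  shows "\<not> (x2,y2) extreme_point_of newton_polygon l n a"
proof -
  define t where "t = (x3-x2)/(x3-x1)"
  have t01: "0 \<le> t" "t \<le> 1" using assms unfolding t_def by (auto simp: divide_le_eq)
  have t1: "1 - t = (x2-x1)/(x3-x1)" using assms unfolding t_def by (simp add: field_simps)
  define c where "c = y2 - (t*y1 + (1-t)*y3)"
  have "(y2 - y1) > (y3-y1)*(x2-x1)/(x3-x1)" using assms by (simp add: pos_divide_less_eq)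
  moreover have "c = (y2 - y1) - (1-t)*(y3-y1)" by (simp add: c_def algebra_simps)
  moreover have "(1-t)*(y3-y1) = (y3-y1)*(x2-x1)/(x3-x1)" by (simp add: t1)
  ultimately have c0: "c > 0" by simp
  have "t*(x3-x1) = x3-x2" unfolding t_def using assms by simp
  then have "x2 = t*x1 + (1-t)*x3" by (simp add: algebra_simps)
  then have "(x2,y2) = t *\<^sub>R (x1,y1) + (1-t) *\<^sub>R (x3,y3) + (0,c)"
    unfolding c_def by (simp add: prod_eq_iff)
  then show ?thesis using not_ext[OF l2 assms(1,2) t01 c0] by simp
qed

definition "AA = {i. i \<le> n \<and> (\<exists>y. (real l ^ i, y) extreme_point_of newton_polygon l n a)}"


lemma AA_fin: "finite AA" unfolding AA_def by simp

lemma alphas_eq: "NP_alphas l n a = sorted_list_of_set AA"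
  unfolding NP_alphas_def AA_def ..

lemma AA_ext: assumes "i \<in> AA"
  shows "i \<le> n \<and> a i \<noteq> 0 \<and> (real l ^ i, real (pval (a i))) extreme_point_of newton_polygon l n a"
proof -
  obtain y where "(real l ^ i, y) extreme_point_of newton_polygon l n a" using assms unfolding AA_def by blast
  from ext_Q[OF l2 this] obtain j where "j \<in> II n a" "(real l ^ i, y) = (real l ^ j, real (pval (a j)))" by blast
  moreover then have "i = j" using lpow_inj[OF l2] by simp
  ultimately show ?thesis using \<open>(real l ^ i, y) extreme_point_of newton_polygon l n a\<close> unfolding II_def by auto
qed

lemma AA_I: "i \<in> II n a \<Longrightarrow> (real l ^ i, real (pval (a i))) extreme_point_of newton_polygon l n a \<Longrightarrow> i \<in> AA"
  unfolding AA_def II_def by auto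

abbreviation "xs \<equiv> NP_alphas l n a"

lemma xs_set: "set xs = AA" unfolding alphas_eq using AA_fin by simp
lemma xs_sorted: "sorted_wrt (<) xs" unfolding alphas_eq by (rule strict_sorted_list_of_set)

lemma alpha_AA: "s < length xs \<Longrightarrow> NP_alpha l n a s \<in> AA"
  unfolding NP_alpha_def using xs_set by (metis nth_mem)

lemma alpha_less: "s < s' \<Longrightarrow> s' < length xs \<Longrightarrow> NP_alpha l n a s < NP_alpha l n a s'"
  unfolding NP_alpha_def using xs_sorted by (simp add: sorted_wrt_iff_nth_less)

lemma AA_alpha: "i \<in> AA \<Longrightarrow> \<exists>s<length xs. NP_alpha l n a s = i"
  unfolding NP_alpha_def using xs_set by (metis in_set_conv_nth)

definition "XX s = real l ^ NP_alpha l n a s"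
definition "YY s = real (NP_beta l n a s)"
definition "mm j = (YY j - YY (j-1)) / (XX j - XX (j-1))"

lemma vert: "s < length xs \<Longrightarrow> NP_alpha l n a s \<le> n \<and> a (NP_alpha l n a s) \<noteq> 0 \<and>
   (XX s, YY s) extreme_point_of newton_polygon l n a"
  using AA_ext[OF alpha_AA] unfolding XX_def YY_def NP_beta_def by blast

lemma vertH: "s < length xs \<Longrightarrow> (XX s, YY s) \<in> newton_polygon l n a"
  using vert extreme_point_of_def by blast

lemma vertPL: assumes "s < length xs" shows "(NP_alpha l n a s, NP_beta l n a s) \<in> PL n a"
proof -
  have "NP_alpha l n a s \<le> n" "a (NP_alpha l n a s) \<noteq> 0" using vert[OF assms] by auto
  then show ?thesis unfolding PL_def NP_beta_def using pval_coeff[of "a (NP_alpha l n a s)"] by auto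
qed

lemma X_less: "s < s' \<Longrightarrow> s' < length xs \<Longrightarrow> XX s < XX s'"
  unfolding XX_def using alpha_less lpow_less[OF l2] by simp

lemma mu_real: "real_of_rat (NP_mu l n a j) = mm j"
  unfolding NP_mu_def mm_def XX_def YY_def by (simp add: of_rat_divide of_rat_diff of_rat_power)


lemma II_ne: "II n a \<noteq> {}" unfolding II_def using a0 by auto

lemma edge_eq: assumes "1 \<le> j" "j < length xs"
  shows "YY j - mm j * XX j = YY (j-1) - mm j * XX (j-1)"
proof -
  have "XX (j-1) < XX j" using X_less assms by simp
  then show ?thesis unfolding mm_def by (simp add: field_simps)
qed

lemma edge_support: assumes j: "1 \<le> j" "j < length xs" and ij: "(i, yv) \<in> PL n a"
  shows "YY (j-1) + mm j * (real l ^ i - XX (j-1)) \<le> real yv"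
proof (rule ccontr)
  let ?m = "mm j"
  define G where "G = YY (j-1) - ?m * XX (j-1)"
  assume "\<not> ?thesis"
  moreover have "pval (a i) \<le> yv" "a i \<noteq> 0" "i \<le> n" using ij unfolding PL_def by (auto intro: pval_le)
  ultimately have gi: "real (pval (a i)) - ?m * real l ^ i < G" unfolding G_def by (simp add: algebra_simps)
  have iII: "i \<in> II n a" using \<open>a i \<noteq> 0\<close> \<open>i \<le> n\<close> unfolding II_def by simp
  obtain r where r: "r \<in> II n a" "(real l ^ r, real (pval (a r))) extreme_point_of newton_polygon l n a"
    "\<forall>i\<in>II n a. real (pval (a r)) + (- ?m) * real l ^ r \<le> real (pval (a i)) + (- ?m) * real l ^ i"
    using L_min[OF l2 II_ne, of "- ?m"] by blast
  have grG: "real (pval (a r)) - ?m * real l ^ r < G" using r(3) iII gi by force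
  obtain s where s: "s < length xs" "NP_alpha l n a s = r" using AA_alpha[OF AA_I[OF r(1,2)]] by blast
  have gs: "YY s - ?m * XX s < G" using grG s unfolding XX_def YY_def NP_beta_def by simp
  have gj: "YY j - ?m * XX j = G" "YY (j-1) - ?m * XX (j-1) = G" using edge_eq[OF j] unfolding G_def by auto
  have "s \<noteq> j" "s \<noteq> j - 1" using gs gj by auto
  then consider "s < j - 1" | "j < s" by linarith
  then show False
  proof cases
    case 1
    have x: "XX s < XX (j-1)" "XX (j-1) < XX j" using X_less 1 j by auto
    have key: "(YY (j-1) - YY s)*(XX j - XX s) - (YY j - YY s)*(XX (j-1) - XX s)
        = (G - (YY s - ?m * XX s)) * (XX j - XX (j-1))"
      using gj by (simp add: algebra_simps)
    have "(G - (YY s - ?m * XX s)) * (XX j - XX (j-1)) > 0" using gs x by simp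
    then have "\<not> (XX (j-1), YY (j-1)) extreme_point_of newton_polygon l n a"
      using key x by (intro mid_contra[OF vertH[OF s(1)] vertH[OF j(2)]]) auto
    moreover have "j - 1 < length xs" using j by simp
    ultimately show False using vert[of "j-1"] by blast
  next
    case 2
    have x: "XX (j-1) < XX j" "XX j < XX s" using X_less 2 j s by auto
    have key: "(YY j - YY (j-1))*(XX s - XX (j-1)) - (YY s - YY (j-1))*(XX j - XX (j-1))
        = (G - (YY s - ?m * XX s)) * (XX j - XX (j-1))"
      using gj by (simp add: algebra_simps)
    have "(G - (YY s - ?m * XX s)) * (XX j - XX (j-1)) > 0" using gs x by simp
    then have "\<not> (XX j, YY j) extreme_point_of newton_polygon l n a"
      using key x j by (intro mid_contra[OF vertH vertH[OF s(1)]]) auto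
    then show False using vert[of "j"] j by simp
  qed
qed

lemma alpha0: assumes "0 < length xs" shows "NP_alpha l n a 0 = 0" "XX 0 = 1"
proof -
  define c where "c = real (pval (a 0)) + 1"
  have c0: "c > 0" unfolding c_def by simp
  have 0: "0 \<in> II n a" unfolding II_def using a0 by simp
  obtain r where r: "r \<in> II n a" "(real l ^ r, real (pval (a r))) extreme_point_of newton_polygon l n a"
    "\<forall>i\<in>II n a. real (pval (a r)) + c * real l ^ r \<le> real (pval (a i)) + c * real l ^ i"
    using L_min[OF l2 II_ne, of c] by blast
  have "r = 0"
  proof (rule ccontr)
    assume "r \<noteq> 0"
    then have "real l ^ 1 \<le> real l ^ r" using lpow_le[OF l2, of 1 r] by simp
    then have "real l \<le> real l ^ r" by (simp only: power_one_right)
    moreover have "(2::real) \<le> real l" using l2 by simp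
    ultimately have "2 \<le> real l ^ r" by linarith
    then have "c * 2 \<le> c * real l ^ r" using c0 by simp
    then have "real (pval (a r)) + c * real l ^ r > real (pval (a 0)) + c * real l ^ 0"
      unfolding c_def by simp
    then show False using r(3) 0 by force
  qed
  then have "0 \<in> AA" using AA_I r by simp
  then obtain s where s: "s < length xs" "NP_alpha l n a s = 0" using AA_alpha by blast
  have "s = 0"
  proof (rule ccontr)
    assume "s \<noteq> 0"
    then have "NP_alpha l n a 0 < NP_alpha l n a s" using alpha_less[of 0 s] s by simp
    then show False using s by simp
  qed
  then show "NP_alpha l n a 0 = 0" using s by simp
  then show "XX 0 = 1" unfolding XX_def by simp
qed

lemma YX_PL: "s < length xs \<Longrightarrow> YY (j-1) + mm j * (XX s - XX (j-1)) \<le> YY s" if "1 \<le> j" "j < length xs"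
  using edge_support[OF that vertPL] unfolding XX_def YY_def by simp

lemma mm_step: assumes "1 \<le> j" "Suc j < length xs" shows "mm j \<le> mm (Suc j)"
proof -
  have j: "j < length xs" using assms by simp
  have "YY (j-1) + mm j * (XX (Suc j) - XX (j-1)) \<le> YY (Suc j)" using YX_PL[OF assms(1) j assms(2)] .
  moreover have "YY j = YY (j-1) + mm j * (XX j - XX (j-1))" using edge_eq[OF assms(1) j] by (simp add: algebra_simps)
  ultimately have "mm j * (XX (Suc j) - XX j) \<le> YY (Suc j) - YY j" by (simp add: algebra_simps)
  moreover have "XX j < XX (Suc j)" using X_less assms by simp
  ultimately show ?thesis unfolding mm_def[of "Suc j"] by (simp add: pos_le_divide_eq)
qed

lemma mm_mono: assumes "1 \<le> j" "j \<le> j'" "j' < length xs" shows "mm j \<le> mm j'"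
  using assms(2,3)
proof (induction j' rule: dec_induct)
  case base then show ?case by simp
next
  case (step m)
  then have "mm m \<le> mm (Suc m)" using mm_step assms(1) by simp
  then show ?case using step by simp
qed

lemma support_vertex: assumes k: "1 \<le> k" "k < length xs" and W: "- mm k \<le> W" "k \<ge> 2 \<longrightarrow> W < - mm (k-1)"
    and ij: "(i, yv) \<in> PL n a"
  shows "W * XX (k-1) + YY (k-1) \<le> W * real l ^ i + real yv"
proof (cases "XX (k-1) \<le> real l ^ i")
  case True
  have "YY (k-1) + mm k * (real l ^ i - XX (k-1)) \<le> real yv" by (rule edge_support[OF k ij])
  moreover have "(mm k + W) * (real l ^ i - XX (k-1)) \<ge> 0" using True W by simp
  ultimately show ?thesis by (simp add: algebra_simps)
next
  case False
  have "k \<ge> 2"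
  proof (rule ccontr)
    assume "\<not> k \<ge> 2" then have "k = 1" using k by simp
    moreover have "xs \<noteq> []" using k by auto
    ultimately have "XX (k-1) = 1" using alpha0(2) by simp
    moreover have "1 \<le> real l ^ i" using l2 by simp
    ultimately show False using False by simp
  qed
  have k1: "1 \<le> k - 1" "k - 1 < length xs" using \<open>k \<ge> 2\<close> k by auto
  have "YY (k-1-1) + mm (k-1) * (real l ^ i - XX (k-1-1)) \<le> real yv" by (rule edge_support[OF k1 ij])
  moreover have "YY (k-1) = YY (k-1-1) + mm (k-1) * (XX (k-1) - XX (k-1-1))"
    using edge_eq[OF k1] by (simp add: algebra_simps)
  ultimately have "YY (k-1) + mm (k-1) * (real l ^ i - XX (k-1)) \<le> real yv" by (simp add: algebra_simps)
  moreover have "(mm (k-1) + W) * (real l ^ i - XX (k-1)) \<ge> 0"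
    using False W \<open>k \<ge> 2\<close> by (intro mult_nonpos_nonpos) auto
  ultimately show ?thesis by (simp add: algebra_simps)
qed

lemma eps_cases: "(eps l n a v = \<infinity> \<and> \<not>(\<exists>u\<in>Vset l n a. v < u)) \<or>
  (\<exists>u0\<in>Vset l n a. v < u0 \<and> (\<forall>u\<in>Vset l n a. v < u \<longrightarrow> u0 \<le> u) \<and> eps l n a v = ereal (real_of_rat (u0 - v)))"
proof (cases "\<exists>u\<in>Vset l n a. v < u")
  case True
  then obtain u where "u \<in> Vset l n a" "v < u" by blast
  from V_min[OF l2 a0 this] show ?thesis unfolding eps_def using True by auto
next
  case False then show ?thesis unfolding eps_def by simp
qed

lemma eps_le: "u \<in> Vset l n a \<Longrightarrow> v < u \<Longrightarrow> eps l n a v \<le> ereal (real_of_rat (u - v))"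
  using eps_cases[of v] by (auto simp: of_rat_less_eq)

lemma eps_pos: "eps l n a v = \<infinity> \<or> (\<exists>q>0. eps l n a v = ereal (real_of_rat q))"
  using eps_cases[of v] by auto

lemmas psi_le' = psi_le[where l=l and n=n and a=a, OF l2 a0]
lemmas psi_in' = psi_in[where l=l and n=n and a=a, OF l2 a0]
lemmas piL_ge' = piL_ge[where l=l and n=n and a=a, OF l2 a0]
lemmas piL_mono' = piL_mono[where l=l and n=n and a=a, OF l2 a0]
lemmas piL_infl' = piL_infl[where l=l and n=n and a=a, OF l2 a0]
lemmas piL_psi' = piL_psi[where l=l and n=n and a=a, OF l2 a0]

lemma main_aux:
  assumes k: "1 \<le> k" "k \<le> NP_kappa l n a"
    and wk: "- NP_mu l n a k \<le> w"
    and wk1: "k \<ge> 2 \<longrightarrow> w < - NP_mu l n a (k - 1)"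
  shows "let M = Inf ({eps l n a w' * ereal (real l powi (int (dww l n a w w') - int (NP_alpha l n a (k - 1))))
                        | w'. w' \<in> Delta l n a w}
                      \<union> {if k = 1 then \<infinity> else ereal (real_of_rat (- NP_mu l n a (k - 1) - w)),
                         Inf ((ereal \<circ> real_of_rat) ` (piL l n a ` Psi l n a w - {w})) - ereal (real_of_rat w)})
         in M \<le> eps l n a w \<and> 0 < M \<and> (M = \<infinity> \<or> (\<exists>q::rat. M = ereal (real_of_rat q)))"
proof -
  define V where "V = Vset l n a"
  define \<alpha> where "\<alpha> = NP_alpha l n a (k - 1)"
  define \<beta> where "\<beta> = NP_beta l n a (k - 1)"
  define D where "D = Delta l n a w"
  define S1 where "S1 = {eps l n a w' * ereal (real l powi (int (dww l n a w w') - int \<alpha>)) | w'. w' \<in> D}"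
  define c1 where "c1 = (if k = 1 then \<infinity> else ereal (real_of_rat (- NP_mu l n a (k - 1) - w)))"
  define X where "X = piL l n a ` Psi l n a w - {w}"
  define c2 where "c2 = Inf ((ereal \<circ> real_of_rat) ` X) - ereal (real_of_rat w)"
  define T where "T = S1 \<union> {c1, c2}"
  define M where "M = Inf T"
  have klen: "k < length xs" using k unfolding NP_kappa_def by simp
  have lpos: "(0::rat) < of_nat l ^ i" for i using l2 by simp
  have lposr: "(0::real) < real l powi e" for e using l2 by simp
  have W1: "- mm k \<le> real_of_rat w" using wk by (metis mu_real of_rat_less_eq of_rat_minus)
  have W2: "k \<ge> 2 \<longrightarrow> real_of_rat w < - mm (k-1)" using wk1 by (metis mu_real of_rat_less of_rat_minus)
  have supp: "w * of_nat l ^ \<alpha> + of_nat \<beta> \<le> w * of_nat l ^ i + of_nat j" if "(i,j) \<in> PL n a" for i j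
  proof -
    have "real_of_rat w * XX (k-1) + YY (k-1) \<le> real_of_rat w * real l ^ i + real j"
      by (rule support_vertex[OF k(1) klen W1 W2 that])
    then have "real_of_rat (w * of_nat l ^ \<alpha> + of_nat \<beta>) \<le> real_of_rat (w * of_nat l ^ i + of_nat j)"
      unfolding XX_def YY_def \<alpha>_def \<beta>_def by (simp add: of_rat_add of_rat_mult of_rat_power)
    then show ?thesis by (simp only: of_rat_less_eq)
  qed
  have abPL: "(\<alpha>, \<beta>) \<in> PL n a" unfolding \<alpha>_def \<beta>_def using vertPL klen by simp
  have psiw: "psi l n a w = w * of_nat l ^ \<alpha> + of_nat \<beta>"
  proof (rule antisym)
    show "psi l n a w \<le> w * of_nat l ^ \<alpha> + of_nat \<beta>" by (rule psi_le'[OF abPL])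
    obtain i j where "(i,j) \<in> PL n a" "psi l n a w = w * of_nat l ^ i + of_nat j"
      using psi_in'[of w] by auto
    then show "w * of_nat l ^ \<alpha> + of_nat \<beta> \<le> psi l n a w" using supp by simp
  qed
  have MT: "M \<le> t" if "t \<in> T" for t unfolding M_def using that by (rule Inf_lower)
  have claim: "\<forall>u\<in>Vi l n a m. w < u \<longrightarrow> M \<le> ereal (real_of_rat (u - w))" for m
  proof (induction m)
    case 0
    show ?case
    proof (intro ballI impI)
      fix u assume "u \<in> Vi l n a 0" "w < u"
      then obtain j where j: "1 \<le> j" "j \<le> NP_kappa l n a" "u = - NP_mu l n a j"
        by (auto simp: NP_slopes_def)
      have jlen: "j < length xs" using j unfolding NP_kappa_def by simp
      have "j < k"
      proof (rule ccontr)
        assume "\<not> j < k"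
        then have "mm k \<le> mm j" using mm_mono k(1) jlen by simp
        then have "NP_mu l n a k \<le> NP_mu l n a j" by (metis mu_real of_rat_less_eq)
        then show False using j(3) \<open>w < u\<close> wk by simp
      qed
      then have "k \<noteq> 1" "1 \<le> j" "j \<le> k - 1" "k - 1 < length xs" using j klen by auto
      then have "mm j \<le> mm (k-1)" using mm_mono by simp
      then have "NP_mu l n a j \<le> NP_mu l n a (k-1)" by (metis mu_real of_rat_less_eq)
      then have "c1 \<le> ereal (real_of_rat (u - w))" unfolding c1_def using \<open>k \<noteq> 1\<close> j(3)
        by (simp add: of_rat_less_eq)
      then show "M \<le> ereal (real_of_rat (u - w))" using MT[of c1] unfolding T_def by simp
    qed
  next
    case (Suc m)
    show ?case
    proof (intro ballI impI)
      fix u assume uV: "u \<in> Vi l n a (Suc m)" and wu: "w < u"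
      then obtain v i j where v: "v \<in> Vi l n a m" "(i,j) \<in> PL n a" "u = piL l n a (v * of_nat l ^ i + of_nat j)"
        by (auto simp: Psi_def)
      have vV: "v \<in> V" unfolding V_def Vset_def using v by blast
      consider "w < v" | "v = w" | "v < w" by linarith
      then show "M \<le> ereal (real_of_rat (u - w))"
      proof cases
        case 1
        have "v \<le> u" using v piL_infl' by simp
        then have "ereal (real_of_rat (v - w)) \<le> ereal (real_of_rat (u - w))" by (simp add: of_rat_less_eq)
        then show ?thesis using Suc 1 v by (meson order_trans)
      next
        case 2
        have uX: "u \<in> X" unfolding X_def using v 2 wu by (auto simp: Psi_def)
        have "Inf ((ereal \<circ> real_of_rat) ` X) \<le> ereal (real_of_rat u)"
          using uX by (intro Inf_lower) auto
        then have "c2 \<le> ereal (real_of_rat u) - ereal (real_of_rat w)" unfolding c2_def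
          by (rule ereal_minus_mono) simp
        then have "c2 \<le> ereal (real_of_rat (u - w))" by (simp add: of_rat_diff)
        then show ?thesis using MT[of c2] unfolding T_def by simp
      next
        case 3
        define q where "q = v * of_nat l ^ i + of_nat j"
        have "psi l n a w < q"
        proof (rule ccontr)
          assume "\<not> psi l n a w < q"
          then have "piL l n a q \<le> piL l n a (psi l n a w)" by (intro piL_mono') simp
          then show False using piL_psi' wu v unfolding q_def by simp
        qed
        define w' where "w' = (psi l n a w - of_nat j) / of_nat l ^ i"
        have qw: "q = psi l n a w + (v - w') * of_nat l ^ i" unfolding q_def w'_def
          using lpos[of i] by (simp add: field_simps)
        have "0 < (v - w') * of_nat l ^ i" using \<open>psi l n a w < q\<close> qw by simp
        then have vw': "w' < v" using lpos[of i] by (simp add: zero_less_mult_iff)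
        have w'D: "w' \<in> D" unfolding D_def Delta_def w'_def using v 3 vw' w'_def by auto
        define d where "d = dww l n a w w'"
        have di: "d \<le> i" unfolding d_def dww_def
          by (rule Least_le) (use v in \<open>auto simp: PL_def w'_def\<close>)
        have "M \<le> eps l n a w' * ereal (real l powi (int d - int \<alpha>))"
          using MT w'D unfolding T_def S1_def d_def by blast
        also have "\<dots> \<le> ereal (real_of_rat (v - w')) * ereal (real l powi (int d - int \<alpha>))"
          using eps_le[of v w'] vV vw' lposr unfolding V_def
          by (intro ereal_mult_right_mono) auto
        also have "\<dots> = ereal (real_of_rat (v - w') * real l powi (int d - int \<alpha>))" by simp
        also have "\<dots> \<le> ereal (real_of_rat (v - w') * real l powi (int i - int \<alpha>))"
          using di l2 vw' by (auto intro!: mult_left_mono power_int_increasing simp: of_rat_less_eq)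
        also have "real_of_rat (v - w') * real l powi (int i - int \<alpha>) = real_of_rat ((v - w') * of_nat l ^ i / of_nat l ^ \<alpha>)"
          using l2 by (simp add: power_int_diff of_rat_mult of_rat_divide of_rat_power)
        also have "(v - w') * of_nat l ^ i / of_nat l ^ \<alpha> = (q - of_nat \<beta>) / of_nat l ^ \<alpha> - w"
          using lpos[of \<alpha>] unfolding qw psiw by (simp add: field_simps)
        also have "(q - of_nat \<beta>) / of_nat l ^ \<alpha> \<le> u"
          using piL_ge'[OF abPL, of q] v unfolding q_def by simp
        then have "ereal (real_of_rat ((q - of_nat \<beta>) / of_nat l ^ \<alpha> - w)) \<le> ereal (real_of_rat (u - w))"
          by (simp add: of_rat_less_eq)
        finally show ?thesis .
      qed
    qed
  qed
  have A: "M \<le> eps l n a w"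
  proof -
    from eps_cases[of w] show ?thesis
    proof
      assume "eps l n a w = \<infinity> \<and> \<not>(\<exists>u\<in>Vset l n a. w < u)"
      then show ?thesis by simp
    next
      assume "\<exists>u0\<in>Vset l n a. w < u0 \<and> (\<forall>u\<in>Vset l n a. w < u \<longrightarrow> u0 \<le> u) \<and> eps l n a w = ereal (real_of_rat (u0 - w))"
      then obtain u0 m where "u0 \<in> Vi l n a m" "w < u0" "eps l n a w = ereal (real_of_rat (u0 - w))"
        unfolding Vset_def by blast
      then show ?thesis using claim[of m] by simp
    qed
  qed
  have Pt: "0 < t \<and> (t = \<infinity> \<or> (\<exists>q::rat. t = ereal (real_of_rat q)))" if tT: "t \<in> T" for t
  proof -
    consider "t \<in> S1" | "t = c1" | "t = c2" using tT unfolding T_def by blast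
    then show ?thesis
    proof cases
      case 1
      then obtain w' where t: "t = eps l n a w' * ereal (real l powi (int (dww l n a w w') - int \<alpha>))"
        unfolding S1_def by blast
      define e where "e = int (dww l n a w w') - int \<alpha>"
      have pe: "real l powi e = real_of_rat (of_nat l powi e)" by (simp add: of_rat_powi)
      have pe0: "0 < real l powi e" using lposr .
      from eps_pos[of w'] show ?thesis
      proof
        assume "eps l n a w' = \<infinity>"
        then have "t = \<infinity>" unfolding t e_def[symmetric] using pe0 l2 by simp
        then show ?thesis by simp
      next
        assume "\<exists>q>0. eps l n a w' = ereal (real_of_rat q)"
        then obtain q where q: "q > 0" "eps l n a w' = ereal (real_of_rat q)" by blast
        then have "t = ereal (real_of_rat (q * of_nat l powi e))"
          unfolding t e_def[symmetric] using pe by (simp add: of_rat_mult)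
        moreover have "0 < real_of_rat q * real l powi e" using q pe0 by simp
        ultimately show ?thesis using pe by (auto simp: of_rat_mult[symmetric])
      qed
    next
      case 2
      show ?thesis
      proof (cases "k = 1")
        case True then show ?thesis using 2 unfolding c1_def by simp
      next
        case False
        then have "w < - NP_mu l n a (k-1)" using wk1 k by simp
        then show ?thesis using 2 False unfolding c1_def by (auto simp: of_rat_less)
      qed
    next
      case 3
      show ?thesis
      proof (cases "X = {}")
        case True then show ?thesis using 3 unfolding c2_def by (simp add: top_ereal_def)
      next
        case False
        have "finite X" unfolding X_def using Psi_fin[where l=l and n=n and a=a and v=w, OF l2 a0] by simp
        then have "Inf ((ereal \<circ> real_of_rat) ` X) = Min ((ereal \<circ> real_of_rat) ` X)"
          using False by (simp add: Min_Inf)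
        also have "\<dots> \<in> (ereal \<circ> real_of_rat) ` X" using False \<open>finite X\<close> by (intro Min_in) auto
        finally obtain u where u: "u \<in> X" "Inf ((ereal \<circ> real_of_rat) ` X) = ereal (real_of_rat u)" by auto
        have "w \<le> u" using u(1) unfolding X_def by (auto simp: Psi_def intro: piL_infl')
        then have "w < u" using u(1) unfolding X_def by auto
        have "t = ereal (real_of_rat (u - w))" using 3 u unfolding c2_def by (simp add: of_rat_diff)
        then show ?thesis using \<open>w < u\<close> by (auto simp: of_rat_less)
      qed
    qed
  qed
  have finD: "finite D"
  proof -
    have "D \<subseteq> (\<lambda>(al, be). (psi l n a w - of_nat be) / of_nat l ^ al) ` PL n a"
      unfolding D_def Delta_def by auto
    moreover have "finite ((\<lambda>(al, be). (psi l n a w - of_nat be) / of_nat l ^ al) ` PL n a)"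
      by (intro finite_imageI PL_finite)
    ultimately show ?thesis by (rule finite_subset)
  qed
  have "S1 = (\<lambda>w'. eps l n a w' * ereal (real l powi (int (dww l n a w w') - int \<alpha>))) ` D"
    unfolding S1_def by auto
  then have "finite T" unfolding T_def using finD by simp
  then have "M = Min T" unfolding M_def T_def by (simp add: Min_Inf)
  also have "\<dots> \<in> T" using \<open>finite T\<close> by (intro Min_in) (auto simp: T_def)
  finally have B: "0 < M \<and> (M = \<infinity> \<or> (\<exists>q::rat. M = ereal (real_of_rat q)))" using Pt by blast
  show ?thesis using A B unfolding Let_def M_def T_def S1_def D_def c1_def c2_def X_def \<alpha>_def by blast
qed

end

theorem mainTheorem15:
  fixes l n k :: nat and a :: "nat \<Rightarrow> 'a::field poly" and w :: rat
  assumes "l \<ge> 2" and "n \<ge> 1" and "a 0 \<noteq> 0" and "a n \<noteq> 0"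
    and "w > - NP_mu l n a (NP_kappa l n a)"
    and "1 \<le> k" and "k \<le> NP_kappa l n a"
    and "- NP_mu l n a k \<le> w"
    and "k \<ge> 2 \<longrightarrow> w < - NP_mu l n a (k - 1)"
  shows "let M = Inf ({eps l n a w' * ereal (real l powi (int (dww l n a w w') - int (NP_alpha l n a (k - 1))))
                        | w'. w' \<in> Delta l n a w}
                      \<union> {if k = 1 then \<infinity> else ereal (real_of_rat (- NP_mu l n a (k - 1) - w)),
                         Inf ((ereal \<circ> real_of_rat) ` (piL l n a ` Psi l n a w - {w})) - ereal (real_of_rat w)})
         in M \<le> eps l n a w \<and> 0 < M \<and> (M = \<infinity> \<or> (\<exists>q::rat. M = ereal (real_of_rat q)))"
  by (rule main_aux[where l=l and n=n and a=a and k=k and w=w, OF assms(1) assms(3) assms(6) assms(7) assms(8) assms(9)])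

end
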